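(* Let $k,n\in\mathbb{N}$ with $k\ge 2$, let $\mathbb{F}\subset\mathbb{C}$ be a field, let $P\in\mathbb{F}[x]$ be a polynomial of degree $k$ with leading coefficient $1$, and let $f\colon\mathbb{F}\to\mathbb{C}$ be a generalized monomial of degree $n$. If the mapping $\mathbb{F}\ni x\mapsto f(P(x))$ is a normal polynomial, then the mapping $\mathbb{F}\ni x\mapsto f(x^k)$ is also a normal polynomial.
   Context: A function $A\colon\mathbb{F}^k\to\mathbb{C}$ is $k$-additive if it is additive (with respect to the additive group of $\mathbb{F}$) in each variable. A function $f\colon\mathbb{F}\to\mathbb{C}$ is a generalized monomial of degree $k$ if there is a symmetric $k$-additive $A\colon\mathbb{F}^k\to\mathbb{C}$ with $f(x)=A(x,\ldots,x)$ for all $x\in\mathbb{F}$. A function $p\colon\mathbb{F}\to\mathbb{C}$ is a normal polynomial if there exist $m\in\mathbb{N}$, additive functions $a_1,\ldots,a_m\colon\mathbb{F}\to\mathbb{C}$ and a complex polynomial $Q\in\mathbb{C}[x_1,\ldots,x_m]$ with $p(x)=Q(a_1(x),\ldots,a_m(x))$ for all $x\in\mathbb{F}$. *)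

theory Defs
  imports "HOL-Computational_Algebra.Polynomial" "HOL-Library.Multiset" Complex_Main
begin

definition subfield_of_complex :: "complex set \<Rightarrow> bool" where
  "subfield_of_complex F \<longleftrightarrow>
     0 \<in> F \<and> 1 \<in> F \<and>
     (\<forall>x\<in>F. \<forall>y\<in>F. x + y \<in> F \<and> x - y \<in> F \<and> x * y \<in> F) \<and>
     (\<forall>x\<in>F. x \<noteq> 0 \<longrightarrow> inverse x \<in> F)"

definition additive_on :: "complex set \<Rightarrow> (complex \<Rightarrow> complex) \<Rightarrow> bool" where
  "additive_on F a \<longleftrightarrow> (\<forall>x\<in>F. \<forall>y\<in>F. a (x + y) = a x + a y)"

text \<open>A k-additive map F^k \<rightarrow> C, arguments given as lists of length k.\<close>
definition multi_additive_on :: "complex set \<Rightarrow> nat \<Rightarrow> (complex list \<Rightarrow> complex) \<Rightarrow> bool" where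
  "multi_additive_on F k A \<longleftrightarrow>
     (\<forall>xs i y z. set xs \<subseteq> F \<and> length xs = k \<and> i < k \<and> y \<in> F \<and> z \<in> F \<longrightarrow>
        A (xs[i := y + z]) = A (xs[i := y]) + A (xs[i := z]))"

definition symmetric_on :: "complex set \<Rightarrow> nat \<Rightarrow> (complex list \<Rightarrow> complex) \<Rightarrow> bool" where
  "symmetric_on F k A \<longleftrightarrow>
     (\<forall>xs ys. set xs \<subseteq> F \<and> length xs = k \<and> mset ys = mset xs \<longrightarrow> A ys = A xs)"

definition generalized_monomial :: "complex set \<Rightarrow> nat \<Rightarrow> (complex \<Rightarrow> complex) \<Rightarrow> bool" where
  "generalized_monomial F k f \<longleftrightarrow>
     (\<exists>A. multi_additive_on F k A \<and> symmetric_on F k A \<and>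
          (\<forall>x\<in>F. f x = A (replicate k x)))"

text \<open>Normal polynomial: p = Q(a_1,...,a_m) with a_i additive and Q a complex polynomial
  in m variables, written out as a finite linear combination of monomials
  (exponent vectors alpha, monomial \<Prod>i<m. y_i ^ alpha i).\<close>
definition normal_polynomial :: "complex set \<Rightarrow> (complex \<Rightarrow> complex) \<Rightarrow> bool" where
  "normal_polynomial F p \<longleftrightarrow>
     (\<exists>(m::nat) (a :: nat \<Rightarrow> complex \<Rightarrow> complex) (S :: (nat \<Rightarrow> nat) set) (c :: (nat \<Rightarrow> nat) \<Rightarrow> complex).
        (\<forall>i<m. additive_on F (a i)) \<and> finite S \<and>
        (\<forall>x\<in>F. p x = (\<Sum>\<alpha>\<in>S. c \<alpha> * (\<Prod>i<m. (a i x) ^ (\<alpha> i)))))"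

end

theory Submission
  imports Defs
begin

lemma fd_mono:
  "d \<le> D \<Longrightarrow> (\<Sum>j\<le>D. (-1)^j * of_nat (D choose j) * of_nat j ^ d :: int)
     = (if d = D then (-1)^D * fact D else 0)"
proof (induction D arbitrary: d)
  case 0
  then show ?case by simp
next
  case (Suc D)
  show ?case
  proof (cases d)
    case 0
    then show ?thesis using choose_alternating_sum[of "Suc D", where 'a=int] by simp
  next
    case (Suc e)
    have eD: "e \<le> D" using Suc.prems Suc by simp
    have "(\<Sum>j\<le>Suc D. (-1)^j * of_nat (Suc D choose j) * of_nat j ^ d :: int)
      = (\<Sum>i\<le>D. (-1)^(Suc i) * of_nat (Suc D choose Suc i) * of_nat (Suc i) ^ Suc e)"
      by (subst sum.atMost_Suc_shift) (simp add: Suc)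
    also have "\<dots> = (\<Sum>i\<le>D. - of_nat (Suc D) * ((-1)^i * of_nat (D choose i) * (of_nat i + 1) ^ e))"
    proof (rule sum.cong[OF refl])
      fix i
      have h: "of_nat (Suc D choose Suc i) * of_nat (Suc i) = (of_nat (Suc D) * of_nat (D choose i) :: int)"
        using Suc_times_binomial[of i D] by (metis mult.commute of_nat_mult)
      have "(-1)^(Suc i) * of_nat (Suc D choose Suc i) * of_nat (Suc i) ^ Suc e
          = - ((-1)^i * (of_nat (Suc D choose Suc i) * of_nat (Suc i)) * of_nat (Suc i) ^ e :: int)"
        by (simp add: algebra_simps)
      also have "\<dots> = - of_nat (Suc D) * ((-1)^i * of_nat (D choose i) * (of_nat i + 1) ^ e)"
        unfolding h by (simp add: algebra_simps)
      finally show "(-1)^(Suc i) * of_nat (Suc D choose Suc i) * of_nat (Suc i) ^ Suc e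
          = - of_nat (Suc D) * ((-1)^i * of_nat (D choose i) * (of_nat i + 1) ^ e :: int)" .
    qed
    also have "\<dots> = - of_nat (Suc D) * (\<Sum>i\<le>D. (-1)^i * of_nat (D choose i) * (of_nat i + 1) ^ e)"
      by (simp add: sum_distrib_left)
    also have "(\<Sum>i\<le>D. (-1)^i * of_nat (D choose i) * (of_nat i + 1) ^ e :: int)
       = (\<Sum>i\<le>D. \<Sum>t\<le>e. of_nat (e choose t) * ((-1)^i * of_nat (D choose i) * of_nat i ^ t))"
    proof (rule sum.cong[OF refl])
      fix i
      show "(-1)^i * of_nat (D choose i) * (of_nat i + 1) ^ e
        = (\<Sum>t\<le>e. of_nat (e choose t) * ((-1)^i * of_nat (D choose i) * of_nat i ^ t) :: int)"
        unfolding binomial_ring[of "of_nat i" 1 e] by (simp add: sum_distrib_left algebra_simps)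
    qed
    also have "\<dots> = (\<Sum>t\<le>e. of_nat (e choose t) * (\<Sum>i\<le>D. (-1)^i * of_nat (D choose i) * of_nat i ^ t))"
      by (subst sum.swap) (simp add: sum_distrib_left)
    also have "\<dots> = (\<Sum>t\<le>e. (if t = D then (-1)^D * fact D else 0))"
      by (rule sum.cong[OF refl]) (use Suc.IH eD in auto)
    also have "\<dots> = (if e = D then (-1)^D * fact D else 0)"
      using eD by (auto simp: sum.delta)
    finally show ?thesis using Suc by (auto simp: algebra_simps)
  qed
qed


lemma poly_upto:
  fixes q :: "complex poly"
  assumes "degree q \<le> D"
  shows "poly q z = (\<Sum>d\<le>D. coeff q d * z ^ d)"
proof -
  have "poly q z = (\<Sum>d\<le>degree q. coeff q d * z ^ d)" by (rule poly_altdef)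
  also have "\<dots> = (\<Sum>d\<le>D. coeff q d * z ^ d)"
    by (rule sum.mono_neutral_left) (use assms in \<open>auto simp: coeff_eq_0\<close>)
  finally show ?thesis .
qed

lemma fd_poly:
  fixes q :: "complex poly"
  assumes "degree q \<le> D"
  shows "(\<Sum>j\<le>D. (-1)^j * of_nat (D choose j) * poly q (of_nat j)) = (-1)^D * fact D * coeff q D"
proof -
  have m: "(\<Sum>j\<le>D. (-1)^j * of_nat (D choose j) * of_nat j ^ d :: complex)
     = (if d = D then (-1)^D * fact D else 0)" if "d \<le> D" for d
  proof -
    have "of_int (\<Sum>j\<le>D. (-1)^j * of_nat (D choose j) * of_nat j ^ d :: int)
       = (of_int (if d = D then (-1)^D * fact D else 0) :: complex)"
      using fd_mono[OF that] by simp
    then show ?thesis by (simp split: if_splits)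
  qed
  have "(\<Sum>j\<le>D. (-1)^j * of_nat (D choose j) * poly q (of_nat j))
     = (\<Sum>j\<le>D. \<Sum>d\<le>D. coeff q d * ((-1)^j * of_nat (D choose j) * of_nat j ^ d) :: complex)"
    by (rule sum.cong[OF refl]) (simp add: poly_upto[OF assms] sum_distrib_left algebra_simps)
  also have "\<dots> = (\<Sum>d\<le>D. coeff q d * (\<Sum>j\<le>D. (-1)^j * of_nat (D choose j) * of_nat j ^ d))"
    by (subst sum.swap) (simp add: sum_distrib_left)
  also have "\<dots> = (\<Sum>d\<le>D. coeff q d * (if d = D then (-1)^D * fact D else 0))"
    by (rule sum.cong[OF refl]) (simp add: m)
  also have "\<dots> = (-1)^D * fact D * coeff q D"
  proof -
    have "(\<lambda>d. coeff q d * (if d = D then (-1)^D * fact D else 0)) = (\<lambda>d. if d = D then coeff q D * ((-1)^D * fact D) else (0::complex))"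
      by auto
    then show ?thesis by (simp only:) (simp add: algebra_simps)
  qed
  finally show ?thesis .
qed

lemma sf_0: "subfield_of_complex F \<Longrightarrow> 0 \<in> F" and sf_1: "subfield_of_complex F \<Longrightarrow> 1 \<in> F"
  and sf_add: "subfield_of_complex F \<Longrightarrow> x \<in> F \<Longrightarrow> y \<in> F \<Longrightarrow> x + y \<in> F"
  and sf_mult: "subfield_of_complex F \<Longrightarrow> x \<in> F \<Longrightarrow> y \<in> F \<Longrightarrow> x * y \<in> F"
  by (auto simp: subfield_of_complex_def)

lemma sf_sum: "subfield_of_complex F \<Longrightarrow> (\<And>j. j \<in> J \<Longrightarrow> g j \<in> F) \<Longrightarrow> sum g J \<in> F"
  by (induction J rule: infinite_finite_induct) (auto intro: sf_0 sf_add)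

lemma sf_power: "subfield_of_complex F \<Longrightarrow> x \<in> F \<Longrightarrow> x ^ n \<in> F"
  by (induction n) (auto intro: sf_1 sf_mult)

lemma sf_nat: "subfield_of_complex F \<Longrightarrow> of_nat n \<in> F"
  by (induction n) (auto intro: sf_0 sf_1 sf_add)

lemma ma_zero:
  assumes "multi_additive_on F n A" "subfield_of_complex F" "set xs \<subseteq> F" "length xs = n" "i < n"
  shows "A (xs[i := 0]) = 0"
proof -
  have "A (xs[i := 0 + 0]) = A (xs[i := 0]) + A (xs[i := 0])"
    using assms sf_0[OF assms(2)] unfolding multi_additive_on_def by blast
  then show ?thesis by simp
qed

lemma ma_sum:
  assumes "multi_additive_on F n A" "subfield_of_complex F" "set xs \<subseteq> F" "length xs = n" "i < n"
    and "finite J" "\<And>j. j \<in> J \<Longrightarrow> g j \<in> F"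
  shows "A (xs[i := sum g J]) = (\<Sum>j\<in>J. A (xs[i := g j]))"
  using assms(6,7)
proof (induction J rule: finite_induct)
  case empty
  then show ?case using ma_zero[OF assms(1-5)] by simp
next
  case (insert j J)
  have "A (xs[i := g j + sum g J]) = A (xs[i := g j]) + A (xs[i := sum g J])"
    using assms(1-5) insert sf_sum[OF assms(2), of J g] unfolding multi_additive_on_def by blast
  then show ?case using insert by simp
qed

lemma ma_nat:
  assumes "multi_additive_on F n A" "subfield_of_complex F" "set xs \<subseteq> F" "length xs = n" "i < n"
    and "e \<in> F"
  shows "A (xs[i := of_nat N * e]) = of_nat N * A (xs[i := e])"
proof (induction N)
  case 0
  then show ?case using ma_zero[OF assms(1-5)] by simp
next
  case (Suc N)
  have "of_nat N * e \<in> F" using sf_mult[OF assms(2) sf_nat[OF assms(2)] assms(6)] .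
  then have "A (xs[i := e + of_nat N * e]) = A (xs[i := e]) + A (xs[i := of_nat N * e])"
    using assms unfolding multi_additive_on_def by blast
  then show ?case using Suc by (simp add: algebra_simps)
qed

lemma np_cong: "normal_polynomial F p \<Longrightarrow> (\<And>x. x \<in> F \<Longrightarrow> q x = p x) \<Longrightarrow> normal_polynomial F q"
  unfolding normal_polynomial_def by metis

lemma np_zero: "normal_polynomial F (\<lambda>x. 0)"
  unfolding normal_polynomial_def by (rule exI[of _ 0], rule exI, rule exI[of _ "{}"]) auto

lemma np_scale: "normal_polynomial F p \<Longrightarrow> normal_polynomial F (\<lambda>x. c * p x)"
proof -
  assume "normal_polynomial F p"
  then obtain m a and S :: "(nat \<Rightarrow> nat) set" and cc where h: "\<forall>i<m. additive_on F (a i)" "finite S"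
    "\<forall>x\<in>F. p x = (\<Sum>\<alpha>\<in>S. cc \<alpha> * (\<Prod>i<m. (a i x) ^ (\<alpha> i)))"
    unfolding normal_polynomial_def by blast
  show ?thesis unfolding normal_polynomial_def
    by (rule exI[of _ m], rule exI[of _ a], rule exI[of _ S], rule exI[of _ "\<lambda>\<alpha>. c * cc \<alpha>"])
      (use h in \<open>auto simp: sum_distrib_left algebra_simps\<close>)
qed

lemma np_comp:
  assumes "normal_polynomial F p" "subfield_of_complex F" "c \<in> F"
  shows "normal_polynomial F (\<lambda>x. p (c * x))"
proof -
  obtain m a and S :: "(nat \<Rightarrow> nat) set" and cc where h: "\<forall>i<m. additive_on F (a i)" "finite S"
    "\<forall>x\<in>F. p x = (\<Sum>\<alpha>\<in>S. cc \<alpha> * (\<Prod>i<m. (a i x) ^ (\<alpha> i)))"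
    using assms(1) unfolding normal_polynomial_def by blast
  have cF: "c * x \<in> F" if "x \<in> F" for x using sf_mult[OF assms(2,3) that] .
  have add: "additive_on F (\<lambda>x. a i (c * x))" if "i < m" for i
    using h(1) that cF unfolding additive_on_def by (simp add: distrib_left sf_add[OF assms(2)])
  show ?thesis unfolding normal_polynomial_def
    by (rule exI[of _ m], rule exI[of _ "\<lambda>i x. a i (c * x)"], rule exI[of _ S], rule exI[of _ cc])
      (use h add cF in auto)
qed


lemma prod_split_add:
  fixes m1 m2 :: nat and g :: "nat \<Rightarrow> 'a::comm_monoid_mult"
  shows
  "(\<Prod>i<m1+m2. g i) = (\<Prod>i<m1. g i) * (\<Prod>i<m2. g (i + m1)) "
proof -
  have "(\<Prod>i<m1+m2. g i) = (\<Prod>i\<in>{0..<m1}. g i) * (\<Prod>i\<in>{m1..<m1+m2}. g i)"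
    by (simp add: atLeast0LessThan[symmetric] prod.atLeastLessThan_concat)
  also have "(\<Prod>i\<in>{m1..<m1+m2}. g i) = (\<Prod>i\<in>{0..<m2}. g (i + m1))"
    using prod.shift_bounds_nat_ivl[of g 0 m1 m2] by (simp add: add.commute)
  finally show ?thesis by (simp add: atLeast0LessThan)
qed

lemma np_add:
  assumes "normal_polynomial F p1" "normal_polynomial F p2"
  shows "normal_polynomial F (\<lambda>x. p1 x + p2 x)"
proof -
  obtain m1 a1 and S1 :: "(nat \<Rightarrow> nat) set" and c1 where h1: "\<forall>i<m1. additive_on F (a1 i)" "finite S1"
    "\<forall>x\<in>F. p1 x = (\<Sum>\<alpha>\<in>S1. c1 \<alpha> * (\<Prod>i<m1. (a1 i x) ^ (\<alpha> i)))"
    using assms(1) unfolding normal_polynomial_def by blast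
  obtain m2 a2 and S2 :: "(nat \<Rightarrow> nat) set" and c2 where h2: "\<forall>i<m2. additive_on F (a2 i)" "finite S2"
    "\<forall>x\<in>F. p2 x = (\<Sum>\<alpha>\<in>S2. c2 \<alpha> * (\<Prod>i<m2. (a2 i x) ^ (\<alpha> i)))"
    using assms(2) unfolding normal_polynomial_def by blast
  define a where "a i = (if i < m1 then a1 i else a2 (i - m1))" for i
  define e1 :: "(nat \<Rightarrow> nat) \<Rightarrow> (nat \<Rightarrow> nat)" where "e1 \<alpha> = (\<lambda>i. if i < m1 then \<alpha> i else 0)" for \<alpha>
  define e2 :: "(nat \<Rightarrow> nat) \<Rightarrow> (nat \<Rightarrow> nat)" where "e2 \<alpha> = (\<lambda>i. if i < m1 then 0 else \<alpha> (i - m1))" for \<alpha>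
  define M where "M \<gamma> x = (\<Prod>i<m1+m2. (a i x) ^ (\<gamma> i))" for \<gamma> x
  have M1: "M (e1 \<alpha>) x = (\<Prod>i<m1. (a1 i x) ^ (\<alpha> i))" for \<alpha> x
    unfolding M_def prod_split_add by (simp add: e1_def a_def)
  have M2: "M (e2 \<alpha>) x = (\<Prod>i<m2. (a2 i x) ^ (\<alpha> i))" for \<alpha> x
    unfolding M_def prod_split_add by (simp add: e2_def a_def)
  define S where "S = e1 ` S1 \<union> e2 ` S2"
  define c where "c \<gamma> = (\<Sum>\<alpha>\<in>{\<alpha>. \<alpha> \<in> S1 \<and> e1 \<alpha> = \<gamma>}. c1 \<alpha>) + (\<Sum>\<alpha>\<in>{\<alpha>. \<alpha> \<in> S2 \<and> e2 \<alpha> = \<gamma>}. c2 \<alpha>)" for \<gamma>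
  have fS: "finite S" using h1(2) h2(2) by (simp add: S_def)
  have addi: "\<forall>i<m1+m2. additive_on F (a i)" using h1(1) h2(1) by (auto simp: a_def)
  have eq: "p1 x + p2 x = (\<Sum>\<gamma>\<in>S. c \<gamma> * M \<gamma> x)" if "x \<in> F" for x
  proof -
    have g1: "(\<Sum>\<gamma>\<in>S. (\<Sum>\<alpha>\<in>{\<alpha>. \<alpha> \<in> S1 \<and> e1 \<alpha> = \<gamma>}. c1 \<alpha> * M (e1 \<alpha>) x)) = (\<Sum>\<alpha>\<in>S1. c1 \<alpha> * M (e1 \<alpha>) x)"
      by (rule sum.group) (use h1(2) fS in \<open>auto simp: S_def\<close>)
    have g2: "(\<Sum>\<gamma>\<in>S. (\<Sum>\<alpha>\<in>{\<alpha>. \<alpha> \<in> S2 \<and> e2 \<alpha> = \<gamma>}. c2 \<alpha> * M (e2 \<alpha>) x)) = (\<Sum>\<alpha>\<in>S2. c2 \<alpha> * M (e2 \<alpha>) x)"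
      by (rule sum.group) (use h2(2) fS in \<open>auto simp: S_def\<close>)
    have "(\<Sum>\<gamma>\<in>S. c \<gamma> * M \<gamma> x) = (\<Sum>\<gamma>\<in>S. (\<Sum>\<alpha>\<in>{\<alpha>. \<alpha> \<in> S1 \<and> e1 \<alpha> = \<gamma>}. c1 \<alpha> * M (e1 \<alpha>) x))
       + (\<Sum>\<gamma>\<in>S. (\<Sum>\<alpha>\<in>{\<alpha>. \<alpha> \<in> S2 \<and> e2 \<alpha> = \<gamma>}. c2 \<alpha> * M (e2 \<alpha>) x))"
      unfolding c_def sum.distrib[symmetric]
      by (rule sum.cong[OF refl]) (simp add: distrib_right sum_distrib_right)
    then show ?thesis using g1 g2 h1(3) h2(3) that by (simp add: M1 M2)
  qed
  show ?thesis unfolding normal_polynomial_def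
    by (rule exI[of _ "m1+m2"], rule exI[of _ a], rule exI[of _ S], rule exI[of _ c])
      (use addi fS eq in \<open>auto simp: M_def\<close>)
qed

lemma np_sum:
  assumes "finite J" "\<And>j. j \<in> J \<Longrightarrow> normal_polynomial F (g j)"
  shows "normal_polynomial F (\<lambda>x. \<Sum>j\<in>J. g j x)"
  using assms
proof (induction J rule: finite_induct)
  case empty
  then show ?case using np_zero by simp
next
  case (insert j J)
  then show ?case using np_add[of F "g j" "\<lambda>x. \<Sum>j\<in>J. g j x"] by simp
qed


lemma key:
  assumes sf: "subfield_of_complex F" and cP: "\<forall>i. coeff P i \<in> F" and dP: "degree P = k"
    and lP: "lead_coeff P = 1" and ma: "multi_additive_on F n A" and xF: "x \<in> F"
  shows "p \<le> n \<Longrightarrow> \<forall>u. (\<forall>l. u l \<in> F) \<longrightarrow> (\<exists>q. degree q \<le> k*p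
     \<and> coeff q (k*p) = A (map (\<lambda>l. if l<p then x^k else u l) [0..<n])
     \<and> (\<forall>r::nat. A (map (\<lambda>l. if l<p then poly P (of_nat r * x) else u l) [0..<n]) = poly q (of_nat r)))"
proof (induction p)
  case 0
  show ?case
  proof (intro allI impI)
    fix u :: "nat \<Rightarrow> complex"
    show "\<exists>q. degree q \<le> k*0
     \<and> coeff q (k*0) = A (map (\<lambda>l. if l<0 then x^k else u l) [0..<n])
     \<and> (\<forall>r::nat. A (map (\<lambda>l. if l<0 then poly P (of_nat r * x) else u l) [0..<n]) = poly q (of_nat r))"
      by (rule exI[of _ "[:A (map u [0..<n]):]"]) simp
  qed
next
  case (Suc p)
  then have pn: "p < n" and IH: "\<forall>u. (\<forall>l. u l \<in> F) \<longrightarrow> (\<exists>q. degree q \<le> k*p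
     \<and> coeff q (k*p) = A (map (\<lambda>l. if l<p then x^k else u l) [0..<n])
     \<and> (\<forall>r::nat. A (map (\<lambda>l. if l<p then poly P (of_nat r * x) else u l) [0..<n]) = poly q (of_nat r)))"
    by auto
  define y where "y r = poly P (of_nat r * x)" for r :: nat
  define e where "e d = coeff P d * x ^ d" for d
  have eF: "e d \<in> F" for d unfolding e_def using sf cP xF by (simp add: sf_mult sf_power)
  have y_exp: "y r = (\<Sum>d\<le>k. of_nat (r ^ d) * e d)" for r
    unfolding y_def e_def poly_altdef dP by (rule sum.cong[OF refl]) (simp add: power_mult_distrib)
  have yF: "y r \<in> F" for r unfolding y_exp
  proof (rule sf_sum[OF sf])
    fix d
    have "(of_nat r :: complex) ^ d \<in> F" by (rule sf_power[OF sf sf_nat[OF sf]])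
    then show "of_nat (r ^ d) * e d \<in> F" unfolding of_nat_power by (rule sf_mult[OF sf _ eF])
  qed
  have gF: "(of_nat r :: complex) ^ d * e d \<in> F" for r d
    by (rule sf_mult[OF sf sf_power[OF sf sf_nat[OF sf]] eF])
  have xkF: "x ^ k \<in> F" using sf xF by (simp add: sf_power)
  have ek: "e k = x ^ k" using lP dP by (simp add: e_def)
  show ?case
  proof (intro allI impI)
    fix u :: "nat \<Rightarrow> complex"
    assume uF: "\<forall>l. u l \<in> F"
    have "\<forall>d. \<exists>q. degree q \<le> k*p
     \<and> coeff q (k*p) = A (map (\<lambda>l. if l<p then x^k else (u(p := e d)) l) [0..<n])
     \<and> (\<forall>r::nat. A (map (\<lambda>l. if l<p then poly P (of_nat r * x) else (u(p := e d)) l) [0..<n]) = poly q (of_nat r))"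
      using IH uF eF by simp
    then obtain Q where Q: "\<And>d. degree (Q d) \<le> k*p"
      "\<And>d. coeff (Q d) (k*p) = A (map (\<lambda>l. if l<p then x^k else (u(p := e d)) l) [0..<n])"
      "\<And>d r. A (map (\<lambda>l. if l<p then y r else (u(p := e d)) l) [0..<n]) = poly (Q d) (of_nat r)"
      unfolding y_def by metis
    define L where "L r = map (\<lambda>l. if l<p then y r else u l) [0..<n]" for r
    have LF: "set (L r) \<subseteq> F" and lL: "length (L r) = n" for r
      using yF uF by (auto simp: L_def)
    have L1: "map (\<lambda>l. if l<Suc p then y r else u l) [0..<n] = (L r)[p := y r]" for r
      by (rule nth_equalityI) (auto simp: L_def nth_list_update less_Suc_eq)
    have L2: "map (\<lambda>l. if l<p then y r else (u(p := e d)) l) [0..<n] = (L r)[p := e d]" for r d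
      by (rule nth_equalityI) (auto simp: L_def nth_list_update)
    have L3: "map (\<lambda>l. if l<p then x^k else (u(p := x^k)) l) [0..<n]
        = map (\<lambda>l. if l<Suc p then x^k else u l) [0..<n]"
      by (rule nth_equalityI) auto
    define q where "q = (\<Sum>d\<le>k. monom 1 d * Q d)"
    have "A (map (\<lambda>l. if l<Suc p then y r else u l) [0..<n]) = poly q (of_nat r)" for r
    proof -
      have "A ((L r)[p := y r]) = (\<Sum>d\<le>k. A ((L r)[p := of_nat (r ^ d) * e d]))"
        unfolding y_exp[of r] by (rule ma_sum[OF ma sf LF lL pn]) (simp_all add: gF)
      also have "\<dots> = (\<Sum>d\<le>k. of_nat r ^ d * A ((L r)[p := e d]))"
        by (rule sum.cong[OF refl]) (metis ma_nat[OF ma sf LF lL pn eF] of_nat_power)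
      also have "\<dots> = poly q (of_nat r)"
        unfolding q_def poly_sum by (rule sum.cong[OF refl]) (simp add: poly_monom L2[symmetric] Q(3))
      finally show ?thesis using L1 by simp
    qed
    moreover have "degree q \<le> k * Suc p"
      unfolding q_def
    proof (rule degree_sum_le)
      fix d assume "d \<in> {..k}"
      have "degree (monom (1::complex) d * Q d) \<le> d + k * p"
        by (rule order_trans[OF degree_mult_le add_mono[OF degree_monom_le Q(1)]])
      then show "degree (monom (1::complex) d * Q d) \<le> k * Suc p" using \<open>d \<in> {..k}\<close> by auto
    qed simp
    moreover have "coeff q (k * Suc p) = A (map (\<lambda>l. if l<Suc p then x^k else u l) [0..<n])"
    proof -
      have c: "coeff (monom 1 d * Q d) (k * Suc p) = (if d = k then coeff (Q k) (k*p) else 0)"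
        if "d \<le> k" for d
      proof (cases "d = k")
        case True then show ?thesis by (simp add: coeff_monom_mult)
      next
        case False
        then have "k * Suc p - d > k * p" using that by auto
        then have "coeff (Q d) (k * Suc p - d) = 0" using Q(1)[of d] by (simp add: coeff_eq_0)
        then show ?thesis using False that by (simp add: coeff_monom_mult)
      qed
      have "coeff q (k * Suc p) = (\<Sum>d\<le>k. (if d = k then coeff (Q k) (k*p) else 0))"
        unfolding q_def coeff_sum by (rule sum.cong[OF refl], rule c, simp)
      also have "\<dots> = coeff (Q k) (k*p)" by simp
      finally show ?thesis using Q(2)[of k] L3 unfolding ek by simp
    qed
    ultimately show "\<exists>q. degree q \<le> k * Suc p
     \<and> coeff q (k * Suc p) = A (map (\<lambda>l. if l<Suc p then x^k else u l) [0..<n])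
     \<and> (\<forall>r::nat. A (map (\<lambda>l. if l<Suc p then poly P (of_nat r * x) else u l) [0..<n]) = poly q (of_nat r))"
      unfolding y_def by blast
  qed
qed


lemma polyF: "subfield_of_complex F \<Longrightarrow> \<forall>i. coeff P i \<in> F \<Longrightarrow> x \<in> F \<Longrightarrow> poly P x \<in> F"
  unfolding poly_altdef by (rule sf_sum) (auto intro: sf_mult sf_power)

theorem lemma4:
  fixes F :: "complex set" and k n :: nat and P :: "complex poly" and f :: "complex \<Rightarrow> complex"
  assumes "k \<ge> 2"
    and "subfield_of_complex F"
    and "\<forall>i. coeff P i \<in> F"
    and "degree P = k"
    and "lead_coeff P = 1"
    and "generalized_monomial F n f"
    and "normal_polynomial F (\<lambda>x. f (poly P x))"
  shows "normal_polynomial F (\<lambda>x. f (x ^ k))"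
proof -
  note sf = assms(2)
  obtain A where ma: "multi_additive_on F n A" and fA: "\<forall>x\<in>F. f x = A (replicate n x)"
    using assms(6) unfolding generalized_monomial_def by blast
  define D where "D = k * n"
  define w :: "nat \<Rightarrow> complex" where "w j = (-1)^j * of_nat (D choose j) / ((-1)^D * fact D)" for j
  have rep: "map (\<lambda>l. if l < n then c else 0) [0..<n] = replicate n c" for c :: complex
    by (rule nth_equalityI) auto
  have eq: "f (x ^ k) = (\<Sum>j\<le>D. w j * f (poly P (of_nat j * x)))" if xF: "x \<in> F" for x
  proof -
    obtain q where q: "degree q \<le> D" "coeff q D = A (map (\<lambda>l. if l<n then x^k else 0) [0..<n])"
      "\<And>r::nat. A (map (\<lambda>l. if l<n then poly P (of_nat r * x) else 0) [0..<n]) = poly q (of_nat r)"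
      using key[OF sf assms(3,4,5) ma xF, of n] sf_0[OF sf] unfolding D_def by auto
    have cq: "coeff q D = f (x ^ k)" using q(2) fA sf_power[OF sf xF] by (simp add: rep)
    have pq: "poly q (of_nat r) = f (poly P (of_nat r * x))" for r
    proof -
      have "poly P (of_nat r * x) \<in> F"
        by (rule polyF[OF sf assms(3)]) (rule sf_mult[OF sf sf_nat[OF sf] xF])
      then show ?thesis using q(3)[of r] fA by (simp add: rep)
    qed
    have "(\<Sum>j\<le>D. (-1)^j * of_nat (D choose j) * f (poly P (of_nat j * x))) = (-1)^D * fact D * f (x ^ k)"
      using fd_poly[OF q(1)] by (simp add: pq cq)
    then have "(\<Sum>j\<le>D. (-1)^j * of_nat (D choose j) * f (poly P (of_nat j * x))) / ((-1)^D * fact D) = f (x ^ k)"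
      by simp
    then show ?thesis unfolding w_def by (simp add: sum_divide_distrib algebra_simps)
  qed
  have "normal_polynomial F (\<lambda>x. \<Sum>j\<le>D. w j * f (poly P (of_nat j * x)))"
  proof (rule np_sum)
    fix j
    show "normal_polynomial F (\<lambda>x. w j * f (poly P (of_nat j * x)))"
      using np_scale[OF np_comp[OF assms(7) sf sf_nat[OF sf]]] by simp
  qed simp
  then show ?thesis by (rule np_cong) (simp add: eq)
qed

end
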